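(* Let $T$ be a ranked monad. Every open $w\in\mathcal{O}(\mathrm{LB}_1T)$ can be written as $w=\bigvee_{m\in T1}\hat m\wedge\mathrm{const}_{w(m)}$, where $\hat m:=\lambda n.[\![m\sim n]\!]$; consequently the frame $\mathcal{O}(\mathrm{LB}_1T)$ is generated by the opens $[m\,|\,b]:=\lambda n.[\![m\sim n]\!]\wedge[b]$ for $m\in T1$ and $b\in T2$.
   Context: Monads on $\mathbf{Set}$: sets $TA$, $\mathrm{return}$, $\mathbin{\gg\!=}\colon TA\times(TB)^A\to TB$ with monad laws; $t\gg s:=t\mathbin{\gg\!=}\lambda a.s$; ranked of rank $\kappa$: every $t\in TA$ is $t'\mathbin{\gg\!=}\lambda i.\mathrm{return}\,f(i)$ with $t'\in TI$, $|I|<\kappa$. $1=\{*\}$, $2=\{0,1\}$. $\mathrm{LB}_0T$: the locale whose frame is presented by generators $[b]$ ($b\in T2$) with relations $[t\mapsto a]\wedge[t\mapsto a']=\bot$ ($a\ne a'$), $[t\gg\mathrm{return}\,a\mapsto a]=\top$, $[t\mathbin{\gg\!=}u\mapsto b]=\bigvee_a[t\mapsto a]\wedge[t\gg u(a)\mapsto b]$, $[t\mapsto a]:=[t\mathbin{\gg\!=}\lambda a'.\mathrm{return}(\delta_a(a'))]$, $\delta_a(a')=1$ iff $a'=a$. Trace equivalence: $[\![m\sim_1m']\!]=\bigvee\{[t\mapsto a]:|A|\le\kappa,t\in TA,u,u'\colon A\to T1,u(a)=u'(a),m=t\mathbin{\gg\!=}u,m'=t\mathbin{\gg\!=}u'\}$;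 for $k\ge2$, $[\![m_1\sim_km_k]\!]=\bigvee\{\bigwedge_{i=1}^{k-1}[\![m_i\sim_1m_{i+1}]\!]:m_2,\dots,m_{k-1}\in T1\}$; $[\![m\sim m']\!]=\bigvee_{k\ge1}[\![m\sim_km']\!]$; $m\sim_bm'$ iff $b\le[\![m\sim m']\!]$ ($b$ complemented). The locale of transitions $\mathrm{LB}_1T$ has frame the set of functions $w\colon T1\to\mathcal{O}(\mathrm{LB}_0T)$ with $b\wedge w(m_1)=b\wedge w(m_2)$ whenever $b$ complemented and $m_1\sim_bm_2$, ordered pointwise (with pointwise meets); $\mathrm{const}_u$ is the constant function with value $u$. *)

theory Defs
  imports Main "HOL-Library.FuncSet"
begin

text \<open>A monad on Set is encoded by: a family of sets T A (for A a subset of the universe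
type 'u; elements of all T A live in the carrier type 't), unit maps ret A : A -> T A and
Kleisli extensions bind A B : T A x (T B)^A -> T B, indexed by the source and target set.\<close>

record ('u, 't) smonad =
  Tm  :: "'u set \<Rightarrow> 't set"
  ret :: "'u set \<Rightarrow> 'u \<Rightarrow> 't"
  bnd :: "'u set \<Rightarrow> 'u set \<Rightarrow> 't \<Rightarrow> ('u \<Rightarrow> 't) \<Rightarrow> 't"

definition is_monad :: "('u, 't) smonad \<Rightarrow> bool" where
  "is_monad M \<longleftrightarrow>
     (\<forall>A a. a \<in> A \<longrightarrow> ret M A a \<in> Tm M A) \<and>
     (\<forall>A B t f. t \<in> Tm M A \<longrightarrow> f \<in> A \<rightarrow> Tm M B \<longrightarrow> bnd M A B t f \<in> Tm M B) \<and>
     (\<forall>A B t f g. t \<in> Tm M A \<longrightarrow> f \<in> A \<rightarrow> Tm M B \<longrightarrow> (\<forall>a\<in>A. f a = g a)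
         \<longrightarrow> bnd M A B t f = bnd M A B t g) \<and>
     (\<forall>A B a f. a \<in> A \<longrightarrow> f \<in> A \<rightarrow> Tm M B \<longrightarrow> bnd M A B (ret M A a) f = f a) \<and>
     (\<forall>A t. t \<in> Tm M A \<longrightarrow> bnd M A A t (ret M A) = t) \<and>
     (\<forall>A B C t f g. t \<in> Tm M A \<longrightarrow> f \<in> A \<rightarrow> Tm M B \<longrightarrow> g \<in> B \<rightarrow> Tm M C \<longrightarrow>
         bnd M B C (bnd M A B t f) g = bnd M A C t (\<lambda>a. bnd M B C (f a) g))"

definition ranked :: "('u, 't) smonad \<Rightarrow> 'k rel \<Rightarrow> bool" where
  "ranked M \<kappa> \<longleftrightarrow> Card_order \<kappa> \<and>
     (\<forall>A t. t \<in> Tm M A \<longrightarrow> (\<exists>I t' f. (card_of I, \<kappa>) \<in> ordLess \<and> t' \<in> Tm M I \<and>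
         f \<in> I \<rightarrow> A \<and> t = bnd M I A t' (\<lambda>i. ret M A (f i))))"

definition seq :: "('u, 't) smonad \<Rightarrow> 'u set \<Rightarrow> 'u set \<Rightarrow> 't \<Rightarrow> 't \<Rightarrow> 't" where
  "seq M A B t s = bnd M A B t (\<lambda>_. s)"

text \<open>The sets 1 = {s} and 2 = {z0, z1} (with z0 \<noteq> z1) inside the universe.\<close>

definition pt :: "('u, 't) smonad \<Rightarrow> 'u \<Rightarrow> 'u \<Rightarrow> 'u set \<Rightarrow> 't \<Rightarrow> 'u \<Rightarrow> 't" where
  "pt M z0 z1 A t a = bnd M A {z0, z1} t (\<lambda>a'. ret M {z0, z1} (if a' = a then z1 else z0))"

text \<open>Elements of the free meet-semilattice on generators T2: finite subsets of T2
(a finite set stands for the meet of its generators).\<close>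
definition Fin :: "('u, 't) smonad \<Rightarrow> 'u \<Rightarrow> 'u \<Rightarrow> 't set set" where
  "Fin M z0 z1 = {S. finite S \<and> S \<subseteq> Tm M {z0, z1}}"

text \<open>Relations, written as inequalities  meet(a) <= join over Bs of meet(B).
An equation l = r is recorded as the two inequalities. The four parts are:
[t |-> a] /\ [t |-> a'] = bot (a \<noteq> a');  top <= [t >> return a |-> a];
[t >>= u |-> b] <= join_a [t |-> a] /\ [t >> u(a) |-> b];  and the converse inequalities.\<close>
definition rels :: "('u, 't) smonad \<Rightarrow> 'u \<Rightarrow> 'u \<Rightarrow> ('t set \<times> 't set set) set" where
  "rels M z0 z1 =
          {({pt M z0 z1 A t a, pt M z0 z1 A t a'}, {}) | A t a a'.
         t \<in> Tm M A \<and> a \<in> A \<and> a' \<in> A \<and> a \<noteq> a'}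
   \<union>      {({}, {{pt M z0 z1 A (seq M B A t (ret M A a)) a}}) | A B t a.
         t \<in> Tm M B \<and> a \<in> A}
   \<union>      {({pt M z0 z1 B (bnd M A B t u) b},
        {{pt M z0 z1 A t a, pt M z0 z1 B (seq M A B t (u a)) b} | a. a \<in> A}) | A B t u b.
         t \<in> Tm M A \<and> u \<in> A \<rightarrow> Tm M B \<and> b \<in> B}
   \<union>      {({pt M z0 z1 A t a, pt M z0 z1 B (seq M A B t (u a)) b},
        {{pt M z0 z1 B (bnd M A B t u) b}}) | A B t u a b.
         t \<in> Tm M A \<and> u \<in> A \<rightarrow> Tm M B \<and> a \<in> A \<and> b \<in> B}"

text \<open>The presented frame: down-sets of the free meet-semilattice (in the order where larger
finite sets are smaller meets) which are saturated for the (meet-stabilised) relations.\<close>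
definition O0 :: "('u, 't) smonad \<Rightarrow> 'u \<Rightarrow> 'u \<Rightarrow> 't set set set" where
  "O0 M z0 z1 = {U. U \<subseteq> Fin M z0 z1 \<and>
      (\<forall>S S'. S \<in> U \<longrightarrow> S' \<in> Fin M z0 z1 \<longrightarrow> S \<subseteq> S' \<longrightarrow> S' \<in> U) \<and>
      (\<forall>(a, Bs) \<in> rels M z0 z1. \<forall>c \<in> Fin M z0 z1. (\<forall>B \<in> Bs. c \<union> B \<in> U) \<longrightarrow> c \<union> a \<in> U)}"

definition top0 :: "('u, 't) smonad \<Rightarrow> 'u \<Rightarrow> 'u \<Rightarrow> 't set set" where
  "top0 M z0 z1 = Fin M z0 z1"

text \<open>Join in O0 (least saturated down-set containing the union); meets are intersections.\<close>
definition Join0 :: "('u, 't) smonad \<Rightarrow> 'u \<Rightarrow> 'u \<Rightarrow> 't set set set \<Rightarrow> 't set set" where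
  "Join0 M z0 z1 Us = \<Inter>{V \<in> O0 M z0 z1. \<Union>Us \<subseteq> V}"

definition bot0 :: "('u, 't) smonad \<Rightarrow> 'u \<Rightarrow> 'u \<Rightarrow> 't set set" where
  "bot0 M z0 z1 = Join0 M z0 z1 {}"

definition gen :: "('u, 't) smonad \<Rightarrow> 'u \<Rightarrow> 'u \<Rightarrow> 't \<Rightarrow> 't set set" where
  "gen M z0 z1 b = Join0 M z0 z1 {{S \<in> Fin M z0 z1. b \<in> S}}"

definition complemented :: "('u, 't) smonad \<Rightarrow> 'u \<Rightarrow> 'u \<Rightarrow> 't set set \<Rightarrow> bool" where
  "complemented M z0 z1 U \<longleftrightarrow> U \<in> O0 M z0 z1 \<and>
     (\<exists>V \<in> O0 M z0 z1. U \<inter> V = bot0 M z0 z1 \<and> Join0 M z0 z1 {U, V} = top0 M z0 z1)"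

definition sim1 :: "('u, 't) smonad \<Rightarrow> 'k rel \<Rightarrow> 'u \<Rightarrow> 'u \<Rightarrow> 'u \<Rightarrow> 't \<Rightarrow> 't \<Rightarrow> 't set set" where
  "sim1 M \<kappa> s z0 z1 m m' = Join0 M z0 z1
     {gen M z0 z1 (pt M z0 z1 A t a) | A t u u' a.
        (card_of A, \<kappa>) \<in> ordLeq \<and> t \<in> Tm M A \<and> u \<in> A \<rightarrow> Tm M {s} \<and> u' \<in> A \<rightarrow> Tm M {s} \<and>
        a \<in> A \<and> u a = u' a \<and> m = bnd M A {s} t u \<and> m' = bnd M A {s} t u'}"

fun chain_meet :: "('u, 't) smonad \<Rightarrow> 'k rel \<Rightarrow> 'u \<Rightarrow> 'u \<Rightarrow> 'u \<Rightarrow> 't \<Rightarrow> 't list \<Rightarrow> 't \<Rightarrow> 't set set" where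
  "chain_meet M \<kappa> s z0 z1 m [] n = sim1 M \<kappa> s z0 z1 m n"
| "chain_meet M \<kappa> s z0 z1 m (x # xs) n = sim1 M \<kappa> s z0 z1 m x \<inter> chain_meet M \<kappa> s z0 z1 x xs n"

text \<open>[m ~ n] = join over k >= 1 of [m ~_k n]; the chain m = m_1, ..., m_k = n has
intermediate elements ms (length k - 2 for k >= 2; k = 1 and k = 2 both give [m ~_1 n]).\<close>
definition sim :: "('u, 't) smonad \<Rightarrow> 'k rel \<Rightarrow> 'u \<Rightarrow> 'u \<Rightarrow> 'u \<Rightarrow> 't \<Rightarrow> 't \<Rightarrow> 't set set" where
  "sim M \<kappa> s z0 z1 m n = Join0 M z0 z1
     {chain_meet M \<kappa> s z0 z1 m ms n | ms. set ms \<subseteq> Tm M {s}}"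

definition O1 :: "('u, 't) smonad \<Rightarrow> 'k rel \<Rightarrow> 'u \<Rightarrow> 'u \<Rightarrow> 'u \<Rightarrow> ('t \<Rightarrow> 't set set) set" where
  "O1 M \<kappa> s z0 z1 = {w \<in> Tm M {s} \<rightarrow>\<^sub>E O0 M z0 z1.
     \<forall>b m1 m2. complemented M z0 z1 b \<longrightarrow> m1 \<in> Tm M {s} \<longrightarrow> m2 \<in> Tm M {s} \<longrightarrow>
        b \<subseteq> sim M \<kappa> s z0 z1 m1 m2 \<longrightarrow> b \<inter> w m1 = b \<inter> w m2}"

definition le1 :: "('u, 't) smonad \<Rightarrow> 'u \<Rightarrow> ('t \<Rightarrow> 't set set) \<Rightarrow> ('t \<Rightarrow> 't set set) \<Rightarrow> bool" where
  "le1 M s v w \<longleftrightarrow> (\<forall>n \<in> Tm M {s}. v n \<subseteq> w n)"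

definition is_lub1 :: "('u, 't) smonad \<Rightarrow> 'k rel \<Rightarrow> 'u \<Rightarrow> 'u \<Rightarrow> 'u \<Rightarrow>
    ('t \<Rightarrow> 't set set) set \<Rightarrow> ('t \<Rightarrow> 't set set) \<Rightarrow> bool" where
  "is_lub1 M \<kappa> s z0 z1 W w \<longleftrightarrow> w \<in> O1 M \<kappa> s z0 z1 \<and> (\<forall>v \<in> W. le1 M s v w) \<and>
     (\<forall>w' \<in> O1 M \<kappa> s z0 z1. (\<forall>v \<in> W. le1 M s v w') \<longrightarrow> le1 M s w w')"

definition meet1 :: "('u, 't) smonad \<Rightarrow> 'u \<Rightarrow> ('t \<Rightarrow> 't set set) \<Rightarrow> ('t \<Rightarrow> 't set set) \<Rightarrow> ('t \<Rightarrow> 't set set)" where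
  "meet1 M s v w = (\<lambda>n \<in> Tm M {s}. v n \<inter> w n)"

definition top1 :: "('u, 't) smonad \<Rightarrow> 'u \<Rightarrow> 'u \<Rightarrow> 'u \<Rightarrow> ('t \<Rightarrow> 't set set)" where
  "top1 M s z0 z1 = (\<lambda>n \<in> Tm M {s}. top0 M z0 z1)"

definition hat :: "('u, 't) smonad \<Rightarrow> 'k rel \<Rightarrow> 'u \<Rightarrow> 'u \<Rightarrow> 'u \<Rightarrow> 't \<Rightarrow> ('t \<Rightarrow> 't set set)" where
  "hat M \<kappa> s z0 z1 m = (\<lambda>n \<in> Tm M {s}. sim M \<kappa> s z0 z1 m n)"

definition const1 :: "('u, 't) smonad \<Rightarrow> 'u \<Rightarrow> 't set set \<Rightarrow> ('t \<Rightarrow> 't set set)" where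
  "const1 M s u = (\<lambda>n \<in> Tm M {s}. u)"

definition basic1 :: "('u, 't) smonad \<Rightarrow> 'k rel \<Rightarrow> 'u \<Rightarrow> 'u \<Rightarrow> 'u \<Rightarrow> 't \<Rightarrow> 't \<Rightarrow> ('t \<Rightarrow> 't set set)" where
  "basic1 M \<kappa> s z0 z1 m b = (\<lambda>n \<in> Tm M {s}. sim M \<kappa> s z0 z1 m n \<inter> gen M z0 z1 b)"

definition generated1 :: "('u, 't) smonad \<Rightarrow> 'k rel \<Rightarrow> 'u \<Rightarrow> 'u \<Rightarrow> 'u \<Rightarrow>
    ('t \<Rightarrow> 't set set) set \<Rightarrow> ('t \<Rightarrow> 't set set) set" where
  "generated1 M \<kappa> s z0 z1 G = \<Inter>{S. S \<subseteq> O1 M \<kappa> s z0 z1 \<and> G \<subseteq> S \<and> top1 M s z0 z1 \<in> S \<and>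
      (\<forall>v \<in> S. \<forall>w \<in> S. meet1 M s v w \<in> S) \<and>
      (\<forall>W w. W \<subseteq> S \<longrightarrow> is_lub1 M \<kappa> s z0 z1 W w \<longrightarrow> w \<in> S)}"

end

theory Submission
  imports Defs
begin


locale LB =
  fixes M :: "('u, 't) smonad" and \<kappa> :: "'k rel" and s z0 z1 :: 'u
  assumes mon: "is_monad M" and rk: "ranked M \<kappa>"
begin

abbreviation "FF \<equiv> Fin M z0 z1"
abbreviation "OZ \<equiv> O0 M z0 z1"
abbreviation "JJ \<equiv> Join0 M z0 z1"
abbreviation "T1 \<equiv> Tm M {s}"
abbreviation "T2 \<equiv> Tm M {z0, z1}"

lemmas ret_T = mon[unfolded is_monad_def, THEN conjunct1, rule_format]
lemmas bnd_T = mon[unfolded is_monad_def, THEN conjunct2, THEN conjunct1, rule_format]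
lemmas bnd_cong = mon[unfolded is_monad_def, THEN conjunct2, THEN conjunct2, THEN conjunct1, rule_format]
lemmas bnd_ret = mon[unfolded is_monad_def, THEN conjunct2, THEN conjunct2, THEN conjunct2, THEN conjunct2, THEN conjunct1, rule_format]

lemma pt_T: "t \<in> Tm M A \<Longrightarrow> pt M z0 z1 A t a \<in> T2"
  unfolding pt_def by (rule bnd_T) (auto intro: ret_T)

lemma seq_T: "t \<in> Tm M A \<Longrightarrow> x \<in> Tm M B \<Longrightarrow> seq M A B t x \<in> Tm M B"
  unfolding seq_def by (rule bnd_T) auto

lemma rels_Fin:
  assumes "(a, Bs) \<in> rels M z0 z1" shows "a \<in> FF"
  using assms unfolding rels_def
  apply (elim UnE CollectE exE conjE)
     apply (simp_all add: Fin_def)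
     apply (simp_all add: pt_T)
   apply (blast intro: pt_T bnd_T)
  apply (blast intro: pt_T seq_T funcset_mem)
  done

lemma O0I:
  assumes 1: "U \<subseteq> FF"
    and 2: "\<And>S S'. S \<in> U \<Longrightarrow> S' \<in> FF \<Longrightarrow> S \<subseteq> S' \<Longrightarrow> S' \<in> U"
    and 3: "\<And>a Bs c. (a, Bs) \<in> rels M z0 z1 \<Longrightarrow> c \<in> FF \<Longrightarrow> (\<And>B. B \<in> Bs \<Longrightarrow> c \<union> B \<in> U) \<Longrightarrow> c \<union> a \<in> U"
  shows "U \<in> OZ"
proof -
  have "\<forall>p\<in>rels M z0 z1. case p of (a, Bs) \<Rightarrow> \<forall>c \<in> FF. (\<forall>B \<in> Bs. c \<union> B \<in> U) \<longrightarrow> c \<union> a \<in> U"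
  proof
    fix p assume p: "p \<in> rels M z0 z1"
    obtain a Bs where pe: "p = (a, Bs)" by force
    show "case p of (a, Bs) \<Rightarrow> \<forall>c \<in> FF. (\<forall>B \<in> Bs. c \<union> B \<in> U) \<longrightarrow> c \<union> a \<in> U"
      unfolding pe using 3 p pe by simp
  qed
  then show ?thesis unfolding O0_def using 1 2 by (intro CollectI conjI allI impI) blast+
qed

lemma O0_sub: "U \<in> OZ \<Longrightarrow> U \<subseteq> FF"
  unfolding O0_def by (rule conjunct1) simp

lemma O0_up: "U \<in> OZ \<Longrightarrow> S \<in> U \<Longrightarrow> S' \<in> FF \<Longrightarrow> S \<subseteq> S' \<Longrightarrow> S' \<in> U"
  unfolding O0_def by simp

lemma sat: "V \<in> OZ \<Longrightarrow> (a, Bs) \<in> rels M z0 z1 \<Longrightarrow> c \<in> FF \<Longrightarrow> (\<And>B. B \<in> Bs \<Longrightarrow> c \<union> B \<in> V)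
   \<Longrightarrow> c \<union> a \<in> V"
proof -
  assume V: "V \<in> OZ" and r: "(a, Bs) \<in> rels M z0 z1" and c: "c \<in> FF" and h: "\<And>B. B \<in> Bs \<Longrightarrow> c \<union> B \<in> V"
  have "\<forall>p\<in>rels M z0 z1. case p of (a, Bs) \<Rightarrow> \<forall>c \<in> FF. (\<forall>B \<in> Bs. c \<union> B \<in> V) \<longrightarrow> c \<union> a \<in> V"
    using V unfolding O0_def by simp
  then have "\<forall>c \<in> FF. (\<forall>B \<in> Bs. c \<union> B \<in> V) \<longrightarrow> c \<union> a \<in> V" using r by fastforce
  then show ?thesis using c h by blast
qed

lemma Fin_Un: "S \<in> FF \<Longrightarrow> T \<in> FF \<Longrightarrow> S \<union> T \<in> FF"
  unfolding Fin_def by auto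

lemma Fin_O0: "FF \<in> OZ"
  by (rule O0I) (auto intro: Fin_Un rels_Fin)

definition upc :: "'t set set \<Rightarrow> bool" where
  "upc X \<longleftrightarrow> X \<subseteq> FF \<and> (\<forall>S S'. S \<in> X \<longrightarrow> S' \<in> FF \<longrightarrow> S \<subseteq> S' \<longrightarrow> S' \<in> X)"

lemma upcD: "upc X \<Longrightarrow> S \<in> X \<Longrightarrow> S' \<in> FF \<Longrightarrow> S \<subseteq> S' \<Longrightarrow> S' \<in> X"
  unfolding upc_def by blast

lemma upcF: "upc X \<Longrightarrow> S \<in> X \<Longrightarrow> S \<in> FF"
  unfolding upc_def by blast

lemma O0_upc: "U \<in> OZ \<Longrightarrow> upc U"
  unfolding upc_def using O0_sub O0_up by blast

lemma Union_upc: "Us \<subseteq> OZ \<Longrightarrow> upc (\<Union>Us)"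
  unfolding upc_def using O0_sub O0_up by blast

lemma O0_Int: "U \<in> OZ \<Longrightarrow> V \<in> OZ \<Longrightarrow> U \<inter> V \<in> OZ"
proof (rule O0I)
  assume U: "U \<in> OZ" and V: "V \<in> OZ"
  show "U \<inter> V \<subseteq> FF" using O0_sub U by blast
  show "\<And>S S'. S \<in> U \<inter> V \<Longrightarrow> S' \<in> FF \<Longrightarrow> S \<subseteq> S' \<Longrightarrow> S' \<in> U \<inter> V"
    using O0_up U V by blast
  show "\<And>a Bs c. (a, Bs) \<in> rels M z0 z1 \<Longrightarrow> c \<in> FF \<Longrightarrow> (\<And>B. B \<in> Bs \<Longrightarrow> c \<union> B \<in> U \<inter> V) \<Longrightarrow> c \<union> a \<in> U \<inter> V"
    using sat[OF U] sat[OF V] by blast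
qed

lemma Inter_O0: "Vs \<subseteq> OZ \<Longrightarrow> Vs \<noteq> {} \<Longrightarrow> \<Inter>Vs \<in> OZ"
proof (rule O0I)
  assume a: "Vs \<subseteq> OZ" "Vs \<noteq> {}"
  show "\<Inter>Vs \<subseteq> FF" using a O0_sub by blast
  show "\<And>S S'. S \<in> \<Inter>Vs \<Longrightarrow> S' \<in> FF \<Longrightarrow> S \<subseteq> S' \<Longrightarrow> S' \<in> \<Inter>Vs"
    using O0_up a(1) by blast
  show "\<And>x Bs c. (x, Bs) \<in> rels M z0 z1 \<Longrightarrow> c \<in> FF \<Longrightarrow> (\<And>B. B \<in> Bs \<Longrightarrow> c \<union> B \<in> \<Inter>Vs) \<Longrightarrow> c \<union> x \<in> \<Inter>Vs"
  proof -
    fix x Bs c assume r: "(x, Bs) \<in> rels M z0 z1" and c: "c \<in> FF" and h: "\<And>B. B \<in> Bs \<Longrightarrow> c \<union> B \<in> \<Inter>Vs"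
    show "c \<union> x \<in> \<Inter>Vs"
    proof
      fix V assume V: "V \<in> Vs"
      show "c \<union> x \<in> V" using sat[OF _ r c, of V] V a(1) h by blast
    qed
  qed
qed

lemma Join_O0: "\<Union>Us \<subseteq> FF \<Longrightarrow> JJ Us \<in> OZ"
proof -
  assume a: "\<Union>Us \<subseteq> FF"
  have ne: "FF \<in> {V \<in> OZ. \<Union>Us \<subseteq> V}" using a Fin_O0 by blast
  show ?thesis unfolding Join0_def by (rule Inter_O0) (use ne in blast)+
qed

lemma Join_ge: "\<Union>Us \<subseteq> JJ Us"
  unfolding Join0_def by blast

lemma Join_ge1: "U \<in> Us \<Longrightarrow> U \<subseteq> JJ Us"
  unfolding Join0_def by blast

lemma Join_least: "V \<in> OZ \<Longrightarrow> \<Union>Us \<subseteq> V \<Longrightarrow> JJ Us \<subseteq> V"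
  unfolding Join0_def by blast

lemma Join_sub: "\<Union>Us \<subseteq> FF \<Longrightarrow> JJ Us \<subseteq> FF"
  using Join_least Fin_O0 by blast

lemma LD:
  assumes U: "upc U" and Y: "upc (\<Union>Us)" and J: "J \<in> OZ" and sub: "U \<inter> \<Union>Us \<subseteq> J"
  shows "U \<inter> JJ Us \<subseteq> J"
proof -
  define X where "X = {S \<in> FF. \<forall>T \<in> U. S \<union> T \<in> J}"
  have UF: "\<And>T. T \<in> U \<Longrightarrow> T \<in> FF" using U by (rule upcF)
  have "X \<in> OZ"
  proof (rule O0I)
    show "X \<subseteq> FF" unfolding X_def by blast
  next
    fix S S' assume S: "S \<in> X" and S': "S' \<in> FF" and ss: "S \<subseteq> S'"
    have "\<forall>T\<in>U. S' \<union> T \<in> J"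
    proof
      fix T assume T: "T \<in> U"
      have "S \<union> T \<in> J" using S T unfolding X_def by blast
      moreover have "S' \<union> T \<in> FF" using Fin_Un[OF S' UF[OF T]] .
      moreover have "S \<union> T \<subseteq> S' \<union> T" using ss by blast
      ultimately show "S' \<union> T \<in> J" using O0_up[OF J] by blast
    qed
    then show "S' \<in> X" unfolding X_def using S' by blast
  next
    fix a Bs c assume r: "(a, Bs) \<in> rels M z0 z1" and c: "c \<in> FF" and h: "\<And>B. B \<in> Bs \<Longrightarrow> c \<union> B \<in> X"
    have aF: "a \<in> FF" using rels_Fin r by blast
    have "\<forall>T\<in>U. c \<union> a \<union> T \<in> J"
    proof
      fix T assume T: "T \<in> U"
      have TF: "T \<in> FF" using UF T .
      have "(c \<union> T) \<union> a \<in> J"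
      proof (rule sat[OF J r Fin_Un[OF c TF]])
        fix B assume "B \<in> Bs"
        then have "c \<union> B \<in> X" by (rule h)
        then have "(c \<union> B) \<union> T \<in> J" using T unfolding X_def by blast
        then show "c \<union> T \<union> B \<in> J" by (simp add: Un_ac)
      qed
      then show "c \<union> a \<union> T \<in> J" by (simp add: Un_ac)
    qed
    then show "c \<union> a \<in> X" unfolding X_def using Fin_Un[OF c aF] by blast
  qed
  moreover have "\<Union>Us \<subseteq> X"
  proof
    fix S assume S: "S \<in> \<Union>Us"
    have SF: "S \<in> FF" using Y S by (rule upcF)
    have "\<forall>T \<in> U. S \<union> T \<in> J"
    proof
      fix T assume T: "T \<in> U"
      have TF: "T \<in> FF" using UF T .
      have "S \<union> T \<in> \<Union>Us" using upcD[OF Y S Fin_Un[OF SF TF]] by blast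
      moreover have "S \<union> T \<in> U" using upcD[OF U T Fin_Un[OF SF TF]] by blast
      ultimately show "S \<union> T \<in> J" using sub by blast
    qed
    then show "S \<in> X" using SF X_def by blast
  qed
  ultimately have "JJ Us \<subseteq> X" by (rule Join_least)
  show ?thesis
  proof
    fix S assume S: "S \<in> U \<inter> JJ Us"
    then have "S \<in> X" using \<open>JJ Us \<subseteq> X\<close> by blast
    then have "\<forall>T \<in> U. S \<union> T \<in> J" unfolding X_def by blast
    then have "S \<union> S \<in> J" using S by blast
    then show "S \<in> J" by simp
  qed
qed

end



context LB begin

definition Up :: "'t set \<Rightarrow> 't set set" where
  "Up S = {S' \<in> FF. S \<subseteq> S'}"

lemma Up_upc: "upc (Up S)"
  unfolding Up_def upc_def by blast

lemma gen_eq: "gen M z0 z1 b = JJ {Up {b}}"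
  unfolding gen_def Up_def by simp

lemma gen_O0: "gen M z0 z1 b \<in> OZ"
  unfolding gen_eq by (rule Join_O0) (auto simp: Up_def)

lemma Up_gen: "Up {b} \<subseteq> gen M z0 z1 b"
  unfolding gen_eq by (rule Join_ge1) simp

lemma bot_O0: "bot0 M z0 z1 \<in> OZ"
  unfolding bot0_def by (rule Join_O0) simp

lemma bot_le: "V \<in> OZ \<Longrightarrow> bot0 M z0 z1 \<subseteq> V"
  unfolding bot0_def by (rule Join_least) auto

lemma rel1: "t \<in> Tm M A \<Longrightarrow> a \<in> A \<Longrightarrow> a' \<in> A \<Longrightarrow> a \<noteq> a' \<Longrightarrow>
   ({pt M z0 z1 A t a, pt M z0 z1 A t a'}, {}) \<in> rels M z0 z1"
  unfolding rels_def by (rule UnI1, rule UnI1, rule UnI1) blast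

lemma rel2: "t \<in> Tm M B \<Longrightarrow> a \<in> A \<Longrightarrow>
   ({}, {{pt M z0 z1 A (seq M B A t (ret M A a)) a}}) \<in> rels M z0 z1"
  unfolding rels_def by (rule UnI1, rule UnI1, rule UnI2) blast

lemma rel3: "t \<in> Tm M A \<Longrightarrow> u \<in> A \<rightarrow> Tm M B \<Longrightarrow> b \<in> B \<Longrightarrow>
   ({pt M z0 z1 B (bnd M A B t u) b},
        {{pt M z0 z1 A t a, pt M z0 z1 B (seq M A B t (u a)) b} | a. a \<in> A}) \<in> rels M z0 z1"
  unfolding rels_def by (rule UnI1, rule UnI2) blast

lemma top_lemma:
  assumes J: "J \<in> OZ" and t: "t \<in> Tm M A" and a0: "a0 \<in> A"
    and H: "\<And>a. a \<in> A \<Longrightarrow> Up {pt M z0 z1 A t a} \<subseteq> J"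
  shows "FF \<subseteq> J"
proof
  fix S assume S: "S \<in> FF"
  define X where "X = pt M z0 z1 A (seq M A A t (ret M A a0)) a0"
  have XT: "X \<in> T2" using X_def pt_T seq_T ret_T t a0 by blast
  have r3: "({X}, {{pt M z0 z1 A t a, X} | a. a \<in> A}) \<in> rels M z0 z1"
    using rel3[OF t, of "\<lambda>_. ret M A a0" A a0] ret_T[OF a0] a0
    unfolding X_def seq_def by simp
  have "S \<union> {X} \<in> J"
  proof (rule sat[OF J r3 S])
    fix B assume "B \<in> {{pt M z0 z1 A t a, X} | a. a \<in> A}"
    then obtain a where a: "a \<in> A" and B: "B = {pt M z0 z1 A t a, X}" by blast
    have "S \<union> B \<in> Up {pt M z0 z1 A t a}"
      using S B XT pt_T[OF t] unfolding Up_def Fin_def by auto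
    then show "S \<union> B \<in> J" using H[OF a] by blast
  qed
  then have "S \<union> {} \<in> J"
    using sat[OF J rel2[OF t a0] S] unfolding X_def by simp
  then show "S \<in> J" by simp
qed

lemma bot_mem: "S \<in> FF \<Longrightarrow> (\<And>V. V \<in> OZ \<Longrightarrow> S \<in> V) \<Longrightarrow> S \<in> bot0 M z0 z1"
  unfolding bot0_def Join0_def by blast

lemma gen_disj:
  assumes t: "t \<in> Tm M A" and a: "a \<in> A" "a' \<in> A" "a \<noteq> a'"
  shows "gen M z0 z1 (pt M z0 z1 A t a) \<inter> gen M z0 z1 (pt M z0 z1 A t a') \<subseteq> bot0 M z0 z1"
proof -
  let ?p = "pt M z0 z1 A t a" and ?q = "pt M z0 z1 A t a'"
  have base: "Up {?q} \<inter> Up {?p} \<subseteq> bot0 M z0 z1"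
  proof
    fix S assume S: "S \<in> Up {?q} \<inter> Up {?p}"
    then have SF: "S \<in> FF" and pq: "?p \<in> S" "?q \<in> S" unfolding Up_def by auto
    show "S \<in> bot0 M z0 z1"
    proof (rule bot_mem[OF SF])
      fix V assume V: "V \<in> OZ"
      have "S \<union> {?p, ?q} \<in> V" using sat[OF V rel1[OF t a] SF] by blast
      then show "S \<in> V" using pq by (simp add: insert_absorb)
    qed
  qed
  have 1: "Up {?q} \<inter> gen M z0 z1 ?p \<subseteq> bot0 M z0 z1"
    unfolding gen_eq by (rule LD) (use Up_upc bot_O0 base in auto)
  have "gen M z0 z1 ?p \<inter> gen M z0 z1 ?q \<subseteq> bot0 M z0 z1"
    unfolding gen_eq[of ?q] by (rule LD) (use O0_upc[OF gen_O0] Up_upc bot_O0 1 in auto)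
  then show ?thesis .
qed

lemma gen_compl:
  assumes t: "t \<in> Tm M A" and a: "a \<in> A"
  shows "complemented M z0 z1 (gen M z0 z1 (pt M z0 z1 A t a))"
proof -
  let ?g = "gen M z0 z1 (pt M z0 z1 A t a)"
  let ?Us = "{gen M z0 z1 (pt M z0 z1 A t a') | a'. a' \<in> A \<and> a' \<noteq> a}"
  define V where "V = JJ ?Us"
  have UsO: "?Us \<subseteq> OZ" using gen_O0 by blast
  have VO: "V \<in> OZ" unfolding V_def by (rule Join_O0) (use UsO O0_sub in blast)
  have gO: "?g \<in> OZ" by (rule gen_O0)
  have m1: "?g \<inter> V \<subseteq> bot0 M z0 z1"
    unfolding V_def by (rule LD) (use O0_upc[OF gO] Union_upc[OF UsO] bot_O0 gen_disj[OF t a] in auto)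
  have m2: "bot0 M z0 z1 \<subseteq> ?g \<inter> V" using bot_le[OF O0_Int[OF gO VO]] .
  have JO: "JJ {?g, V} \<in> OZ" by (rule Join_O0) (use O0_sub[OF gO] O0_sub[OF VO] in auto)
  have j1: "JJ {?g, V} \<subseteq> FF" by (rule Join_sub) (use O0_sub[OF gO] O0_sub[OF VO] in auto)
  have j2: "FF \<subseteq> JJ {?g, V}"
  proof (rule top_lemma[OF JO t a])
    fix a' assume a': "a' \<in> A"
    have "gen M z0 z1 (pt M z0 z1 A t a') \<subseteq> JJ {?g, V}"
    proof (cases "a' = a")
      case True then show ?thesis using Join_ge1[of ?g "{?g, V}"] by simp
    next
      case False
      then have "gen M z0 z1 (pt M z0 z1 A t a') \<subseteq> V"
        unfolding V_def using a' by (intro Join_ge1) blast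
      then show ?thesis using Join_ge1[of V "{?g, V}"] by blast
    qed
    then show "Up {pt M z0 z1 A t a'} \<subseteq> JJ {?g, V}" using Up_gen by blast
  qed
  show ?thesis unfolding complemented_def top0_def
    using gO VO m1 m2 j1 j2 by blast
qed

end



context LB begin

abbreviation "SIM1 \<equiv> sim1 M \<kappa> s z0 z1"
abbreviation "CH \<equiv> chain_meet M \<kappa> s z0 z1"
abbreviation "SIM \<equiv> sim M \<kappa> s z0 z1"

definition fam1 :: "'t \<Rightarrow> 't \<Rightarrow> 't set set set" where
  "fam1 m m' = {gen M z0 z1 (pt M z0 z1 A t a) | A t u u' a.
        (card_of A, \<kappa>) \<in> ordLeq \<and> t \<in> Tm M A \<and> u \<in> A \<rightarrow> Tm M {s} \<and> u' \<in> A \<rightarrow> Tm M {s} \<and>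
        a \<in> A \<and> u a = u' a \<and> m = bnd M A {s} t u \<and> m' = bnd M A {s} t u'}"

lemma sim1_eq: "SIM1 m m' = JJ (fam1 m m')"
  unfolding sim1_def fam1_def ..

lemma fam1_E:
  assumes "g \<in> fam1 m m'"
  obtains A t u u' a where "g = gen M z0 z1 (pt M z0 z1 A t a)" "(card_of A, \<kappa>) \<in> ordLeq" "t \<in> Tm M A"
    "u \<in> A \<rightarrow> Tm M {s}" "u' \<in> A \<rightarrow> Tm M {s}" "a \<in> A" "u a = u' a" "m = bnd M A {s} t u" "m' = bnd M A {s} t u'"
  using assms unfolding fam1_def by (elim CollectE exE conjE) blast

lemma fam1_O0: "fam1 m m' \<subseteq> OZ"
proof
  fix g assume "g \<in> fam1 m m'"
  then show "g \<in> OZ" by (rule fam1_E) (simp add: gen_O0)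
qed

lemma fam1_sub: "fam1 m m' \<subseteq> fam1 m' m"
proof
  fix g assume "g \<in> fam1 m m'"
  then obtain A t u u' a where h: "g = gen M z0 z1 (pt M z0 z1 A t a)" "(card_of A, \<kappa>) \<in> ordLeq" "t \<in> Tm M A"
    "u \<in> A \<rightarrow> Tm M {s}" "u' \<in> A \<rightarrow> Tm M {s}" "a \<in> A" "u a = u' a" "m = bnd M A {s} t u" "m' = bnd M A {s} t u'"
    by (rule fam1_E)
  show "g \<in> fam1 m' m"
    unfolding fam1_def
    apply (rule CollectI)
    apply (rule exI[of _ A], rule exI[of _ t], rule exI[of _ u'], rule exI[of _ u], rule exI[of _ a])
    using h by simp
qed

lemma sim1_sym: "SIM1 m m' = SIM1 m' m"
  unfolding sim1_eq using fam1_sub by (metis subset_antisym)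

lemma sim1_O0: "SIM1 m m' \<in> OZ"
  unfolding sim1_eq by (rule Join_O0) (use fam1_O0 O0_sub in blast)

lemma chain_O0: "CH m ms n \<in> OZ"
  by (induction ms arbitrary: m) (auto intro: O0_Int sim1_O0)

lemma chain_app: "CH a (xs @ y # ys) c = CH a xs y \<inter> CH y ys c"
  by (induction xs arbitrary: a) (auto)

lemma chain_rev: "CH a ms b = CH b (rev ms) a"
proof (induction ms arbitrary: a)
  case Nil
  then show ?case using sim1_sym by simp
next
  case (Cons x xs)
  have "CH b (rev (x # xs)) a = CH b (rev xs) x \<inter> SIM1 x a"
    using chain_app[of b "rev xs" x "[]" a] by simp
  then show ?case using Cons sim1_sym by auto
qed

definition famc :: "'t \<Rightarrow> 't \<Rightarrow> 't set set set" where
  "famc m n = {CH m ms n | ms. set ms \<subseteq> T1}"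

lemma sim_eq: "SIM m n = JJ (famc m n)"
  unfolding sim_def famc_def ..

lemma famc_O0: "famc m n \<subseteq> OZ"
  unfolding famc_def using chain_O0 by blast

lemma sim_O0: "SIM m n \<in> OZ"
  unfolding sim_eq by (rule Join_O0) (use famc_O0 O0_sub in blast)

lemma famc_sub: "famc m n \<subseteq> famc n m"
proof
  fix x assume "x \<in> famc m n"
  then obtain ms where "x = CH m ms n" "set ms \<subseteq> T1" unfolding famc_def by blast
  then have "x = CH n (rev ms) m" "set (rev ms) \<subseteq> T1" using chain_rev by auto
  then show "x \<in> famc n m" unfolding famc_def by blast
qed

lemma sim_sym: "SIM m n = SIM n m"
  unfolding sim_eq using famc_sub by (metis subset_antisym)

lemma sim1_le: "SIM1 m n \<subseteq> SIM m n"
  unfolding sim_eq famc_def by (rule Join_ge1) (rule CollectI, rule exI[of _ "[]"], simp)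

lemma sim_trans:
  assumes b: "b \<in> T1"
  shows "SIM a b \<inter> SIM b c \<subseteq> SIM a c"
proof -
  have step: "CH a ms b \<inter> SIM b c \<subseteq> SIM a c" if ms: "set ms \<subseteq> T1" for ms
    unfolding sim_eq[of b c]
  proof (rule LD)
    show "upc (CH a ms b)" by (rule O0_upc[OF chain_O0])
    show "upc (\<Union> (famc b c))" by (rule Union_upc[OF famc_O0])
    show "SIM a c \<in> OZ" by (rule sim_O0)
    show "CH a ms b \<inter> \<Union> (famc b c) \<subseteq> SIM a c"
    proof
      fix S assume "S \<in> CH a ms b \<inter> \<Union> (famc b c)"
      then obtain ms' where S: "S \<in> CH a ms b" "S \<in> CH b ms' c" and ms': "set ms' \<subseteq> T1"
        unfolding famc_def by blast
      then have "S \<in> CH a (ms @ b # ms') c" using chain_app by blast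
      moreover have "CH a (ms @ b # ms') c \<in> famc a c" unfolding famc_def using ms ms' b
        by (intro CollectI exI[of _ "ms @ b # ms'"]) auto
      ultimately show "S \<in> SIM a c" unfolding sim_eq using Join_ge1 by blast
    qed
  qed
  have "SIM b c \<inter> SIM a b \<subseteq> SIM a c"
    unfolding sim_eq[of a b]
  proof (rule LD)
    show "upc (SIM b c)" by (rule O0_upc[OF sim_O0])
    show "upc (\<Union> (famc a b))" by (rule Union_upc[OF famc_O0])
    show "SIM a c \<in> OZ" by (rule sim_O0)
    show "SIM b c \<inter> \<Union> (famc a b) \<subseteq> SIM a c"
      using step unfolding famc_def by blast
  qed
  then show ?thesis by blast
qed

lemma card_s: "(card_of {s}, \<kappa>) \<in> ordLeq"
proof -
  have co: "Card_order \<kappa>" using rk unfolding ranked_def by blast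
  have "ret M {s} s \<in> T1" by (rule ret_T) simp
  then obtain I :: "'u set" where I: "(card_of I, \<kappa>) \<in> ordLess"
    using rk unfolding ranked_def by blast
  have "Field \<kappa> \<noteq> {}"
  proof
    assume e: "Field \<kappa> = {}"
    have "(card_of (Field \<kappa>), card_of I) \<in> ordLeq" using e card_of_empty by simp
    moreover have "(\<kappa>, card_of (Field \<kappa>)) \<in> ordIso" using card_of_Field_ordIso[OF co] ordIso_symmetric by blast
    ultimately have "(\<kappa>, card_of I) \<in> ordLeq" using ordIso_ordLeq_trans by blast
    then show False using I not_ordLess_ordLeq by blast
  qed
  then show ?thesis by (rule Card_order_singl_ordLeq[OF co])
qed

lemma gen_top: "n \<in> T1 \<Longrightarrow> gen M z0 z1 (pt M z0 z1 {s} n s) = FF"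
proof
  assume n: "n \<in> T1"
  show "gen M z0 z1 (pt M z0 z1 {s} n s) \<subseteq> FF" using O0_sub[OF gen_O0] .
  show "FF \<subseteq> gen M z0 z1 (pt M z0 z1 {s} n s)"
    by (rule top_lemma[OF gen_O0 n]) (use Up_gen in auto)
qed

lemma sim_refl: "n \<in> T1 \<Longrightarrow> SIM n n = FF"
proof
  assume n: "n \<in> T1"
  show "SIM n n \<subseteq> FF" using O0_sub[OF sim_O0] .
  have "gen M z0 z1 (pt M z0 z1 {s} n s) \<in> fam1 n n"
    unfolding fam1_def
    apply (rule CollectI)
    apply (rule exI[of _ "{s}"], rule exI[of _ n], rule exI[of _ "ret M {s}"], rule exI[of _ "ret M {s}"], rule exI[of _ s])
    using card_s n bnd_ret[OF n] by (auto intro: ret_T)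
  then have "gen M z0 z1 (pt M z0 z1 {s} n s) \<subseteq> SIM1 n n" unfolding sim1_eq by (rule Join_ge1)
  then show "FF \<subseteq> SIM n n" using gen_top[OF n] sim1_le by blast
qed

definition O1' where "O1' = O1 M \<kappa> s z0 z1"

lemma O1_val: "w \<in> O1' \<Longrightarrow> m \<in> T1 \<Longrightarrow> w m \<in> OZ"
  unfolding O1'_def O1_def by auto

lemma O1_cond: "w \<in> O1' \<Longrightarrow> complemented M z0 z1 b \<Longrightarrow> m1 \<in> T1 \<Longrightarrow> m2 \<in> T1 \<Longrightarrow> b \<subseteq> SIM m1 m2
   \<Longrightarrow> b \<inter> w m1 = b \<inter> w m2"
  unfolding O1'_def O1_def by blast

lemma O1_I: "w \<in> T1 \<rightarrow>\<^sub>E OZ \<Longrightarrow> (\<And>b m1 m2. complemented M z0 z1 b \<Longrightarrow> m1 \<in> T1 \<Longrightarrow> m2 \<in> T1 \<Longrightarrow> b \<subseteq> SIM m1 m2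
   \<Longrightarrow> b \<inter> w m1 = b \<inter> w m2) \<Longrightarrow> w \<in> O1'"
  unfolding O1'_def O1_def by blast

lemma core1:
  assumes w: "w \<in> O1'" and m: "m \<in> T1" and m': "m' \<in> T1"
  shows "w m \<inter> SIM1 m m' \<subseteq> w m'"
  unfolding sim1_eq
proof (rule LD)
  show "upc (w m)" by (rule O0_upc[OF O1_val[OF w m]])
  show "upc (\<Union> (fam1 m m'))" by (rule Union_upc[OF fam1_O0])
  show "w m' \<in> OZ" by (rule O1_val[OF w m'])
  show "w m \<inter> \<Union> (fam1 m m') \<subseteq> w m'"
  proof
    fix S assume "S \<in> w m \<inter> \<Union> (fam1 m m')"
    then obtain g where S: "S \<in> w m" "S \<in> g" and g: "g \<in> fam1 m m'" by blast
    from g obtain A t a where gd: "g = gen M z0 z1 (pt M z0 z1 A t a)" "t \<in> Tm M A" "a \<in> A"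
      by (rule fam1_E) blast
    have c: "complemented M z0 z1 g" unfolding gd(1) by (rule gen_compl[OF gd(2,3)])
    have "g \<subseteq> SIM1 m m'" unfolding sim1_eq using g by (rule Join_ge1)
    then have "g \<subseteq> SIM m m'" using sim1_le by blast
    then have "g \<inter> w m = g \<inter> w m'" by (rule O1_cond[OF w c m m'])
    then show "S \<in> w m'" using S by blast
  qed
qed

lemma core_chain:
  assumes w: "w \<in> O1'"
  shows "m \<in> T1 \<Longrightarrow> n \<in> T1 \<Longrightarrow> set ms \<subseteq> T1 \<Longrightarrow> w m \<inter> CH m ms n \<subseteq> w n"
proof (induction ms arbitrary: m)
  case Nil
  then show ?case using core1[OF w] by simp
next
  case (Cons x xs)
  have x: "x \<in> T1" using Cons by simp
  have "w m \<inter> SIM1 m x \<subseteq> w x" using core1[OF w Cons.prems(1) x] .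
  moreover have "w x \<inter> CH x xs n \<subseteq> w n" using Cons by simp
  ultimately show ?case by auto
qed

lemma core:
  assumes w: "w \<in> O1'" and m: "m \<in> T1" and n: "n \<in> T1"
  shows "w m \<inter> SIM m n \<subseteq> w n"
  unfolding sim_eq
proof (rule LD)
  show "upc (w m)" by (rule O0_upc[OF O1_val[OF w m]])
  show "upc (\<Union> (famc m n))" by (rule Union_upc[OF famc_O0])
  show "w n \<in> OZ" by (rule O1_val[OF w n])
  show "w m \<inter> \<Union> (famc m n) \<subseteq> w n"
    using core_chain[OF w m n] unfolding famc_def by blast
qed

end



context LB begin

abbreviation "HC m U \<equiv> meet1 M s (hat M \<kappa> s z0 z1 m) (const1 M s U)"

lemma HC_app: "n \<in> T1 \<Longrightarrow> HC m U n = SIM m n \<inter> U"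
  unfolding meet1_def hat_def const1_def by simp

lemma HC_O1:
  assumes m: "m \<in> T1" and U: "U \<in> OZ"
  shows "HC m U \<in> O1'"
proof (rule O1_I)
  show "HC m U \<in> T1 \<rightarrow>\<^sub>E OZ"
    unfolding meet1_def hat_def const1_def
    using O0_Int[OF sim_O0 U] by (simp add: restrict_PiE_iff)
next
  fix b m1 m2 assume b: "complemented M z0 z1 b" and m1: "m1 \<in> T1" and m2: "m2 \<in> T1"
    and bs: "b \<subseteq> SIM m1 m2"
  have bs': "b \<subseteq> SIM m2 m1" using bs sim_sym by blast
  have "b \<inter> SIM m m1 \<subseteq> SIM m m2" using bs sim_trans[OF m1, of m m2] by blast
  moreover have "b \<inter> SIM m m2 \<subseteq> SIM m m1" using bs' sim_trans[OF m2, of m m1] by blast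
  ultimately have "b \<inter> (SIM m m1 \<inter> U) = b \<inter> (SIM m m2 \<inter> U)" by blast
  then show "b \<inter> HC m U m1 = b \<inter> HC m U m2" using HC_app m1 m2 by simp
qed

lemma lub_w:
  assumes w: "w \<in> O1'"
  shows "is_lub1 M \<kappa> s z0 z1 {HC m (w m) | m. m \<in> T1} w"
  unfolding is_lub1_def
proof (intro conjI ballI impI)
  show "w \<in> O1 M \<kappa> s z0 z1" using w unfolding O1'_def .
next
  fix v assume "v \<in> {HC m (w m) | m. m \<in> T1}"
  then obtain m where v: "v = HC m (w m)" and m: "m \<in> T1" by blast
  show "le1 M s v w" unfolding le1_def
  proof
    fix n assume n: "n \<in> T1"
    show "v n \<subseteq> w n" unfolding v HC_app[OF n] using core[OF w m n] by blast
  qed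
next
  fix w' assume w': "w' \<in> O1 M \<kappa> s z0 z1" and ub: "\<forall>v\<in>{HC m (w m) | m. m \<in> T1}. le1 M s v w'"
  show "le1 M s w w'" unfolding le1_def
  proof
    fix n assume n: "n \<in> T1"
    have "le1 M s (HC n (w n)) w'" using ub n by blast
    then have "HC n (w n) n \<subseteq> w' n" using n unfolding le1_def by blast
    moreover have "HC n (w n) n = w n"
      using HC_app[OF n] sim_refl[OF n] O0_sub[OF O1_val[OF w n]] by blast
    ultimately show "w n \<subseteq> w' n" by simp
  qed
qed

definition PS :: "'t set \<Rightarrow> 't set set" where "PS S = JJ {Up S}"

lemma PS_O0: "PS S \<in> OZ"
  unfolding PS_def by (rule Join_O0) (auto simp: Up_def)

lemma PS_empty: "PS {} = FF"
proof
  show "PS {} \<subseteq> FF" using O0_sub[OF PS_O0] .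
  have "Up {} = FF" unfolding Up_def by blast
  then show "FF \<subseteq> PS {}" unfolding PS_def using Join_ge1[of "Up {}" "{Up {}}"] by simp
qed

lemma PS_insert: "PS (insert b S) = gen M z0 z1 b \<inter> PS S"
proof
  have "Up (insert b S) \<subseteq> Up {b}" "Up (insert b S) \<subseteq> Up S" unfolding Up_def by auto
  then have "Up (insert b S) \<subseteq> gen M z0 z1 b \<inter> PS S"
    using Up_gen Join_ge1[of "Up S" "{Up S}"] unfolding PS_def by blast
  then show "PS (insert b S) \<subseteq> gen M z0 z1 b \<inter> PS S"
    unfolding PS_def[of "insert b S"] by (intro Join_least O0_Int gen_O0 PS_O0) auto
next
  have J: "PS (insert b S) \<in> OZ" by (rule PS_O0)
  have ge: "Up (insert b S) \<subseteq> PS (insert b S)" unfolding PS_def by (rule Join_ge1) simp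
  have 1: "Up {b} \<inter> PS S \<subseteq> PS (insert b S)"
    unfolding PS_def[of S]
  proof (rule LD[OF Up_upc _ J])
    show "upc (\<Union> {Up S})" using Up_upc by simp
    show "Up {b} \<inter> \<Union> {Up S} \<subseteq> PS (insert b S)" using ge unfolding Up_def by auto
  qed
  have "PS S \<inter> gen M z0 z1 b \<subseteq> PS (insert b S)"
    unfolding gen_eq
  proof (rule LD[OF O0_upc[OF PS_O0] _ J])
    show "upc (\<Union> {Up {b}})" using Up_upc by simp
    show "PS S \<inter> \<Union> {Up {b}} \<subseteq> PS (insert b S)" using 1 by auto
  qed
  then show "gen M z0 z1 b \<inter> PS S \<subseteq> PS (insert b S)" by blast
qed

definition GG where "GG = {basic1 M \<kappa> s z0 z1 m b | m b. m \<in> T1 \<and> b \<in> T2}"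

lemma basic_eq: "basic1 M \<kappa> s z0 z1 m b = HC m (gen M z0 z1 b)"
  unfolding basic1_def meet1_def hat_def const1_def by (simp add: fun_eq_iff)

definition good :: "('t \<Rightarrow> 't set set) set \<Rightarrow> bool" where
  "good Sf \<longleftrightarrow> Sf \<subseteq> O1 M \<kappa> s z0 z1 \<and> GG \<subseteq> Sf \<and> top1 M s z0 z1 \<in> Sf \<and>
      (\<forall>v \<in> Sf. \<forall>w \<in> Sf. meet1 M s v w \<in> Sf) \<and>
      (\<forall>W w. W \<subseteq> Sf \<longrightarrow> is_lub1 M \<kappa> s z0 z1 W w \<longrightarrow> w \<in> Sf)"

lemma gen1_eq: "generated1 M \<kappa> s z0 z1 GG = \<Inter>{Sf. good Sf}"
  unfolding generated1_def good_def ..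

lemma HC_PS_in:
  assumes Sf: "good Sf" and m: "m \<in> T1"
  shows "finite S \<Longrightarrow> S \<subseteq> T2 \<Longrightarrow> HC m (PS S) \<in> Sf"
proof (induction S rule: finite_induct)
  case empty
  have b0: "pt M z0 z1 {s} m s \<in> T2" using pt_T[OF m] .
  have "HC m (PS {}) = basic1 M \<kappa> s z0 z1 m (pt M z0 z1 {s} m s)"
    unfolding basic_eq PS_empty gen_top[OF m] ..
  moreover have "basic1 M \<kappa> s z0 z1 m (pt M z0 z1 {s} m s) \<in> GG" unfolding GG_def using m b0 by blast
  ultimately show ?case using Sf unfolding good_def by auto
next
  case (insert b S)
  have bT: "b \<in> T2" using insert by simp
  have IH: "HC m (PS S) \<in> Sf" using insert by simp
  have "basic1 M \<kappa> s z0 z1 m b \<in> GG" unfolding GG_def using m bT by blast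
  then have B: "basic1 M \<kappa> s z0 z1 m b \<in> Sf" using Sf unfolding good_def by blast
  have "HC m (PS (insert b S)) = meet1 M s (basic1 M \<kappa> s z0 z1 m b) (HC m (PS S))"
    unfolding PS_insert basic_eq meet1_def hat_def const1_def by (auto simp: fun_eq_iff)
  then show ?case using B IH Sf unfolding good_def by metis
qed

lemma HC_in:
  assumes Sf: "good Sf" and m: "m \<in> T1" and U: "U \<in> OZ"
  shows "HC m U \<in> Sf"
proof -
  let ?W = "{HC m (PS S) | S. S \<in> U}"
  have WS: "?W \<subseteq> Sf"
  proof
    fix v assume "v \<in> ?W"
    then obtain S where v: "v = HC m (PS S)" and S: "S \<in> U" by blast
    have "S \<in> FF" using O0_sub[OF U] S by blast
    then have "finite S" "S \<subseteq> T2" unfolding Fin_def by auto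
    then show "v \<in> Sf" unfolding v by (rule HC_PS_in[OF Sf m])
  qed
  have lub: "is_lub1 M \<kappa> s z0 z1 ?W (HC m U)"
    unfolding is_lub1_def
  proof (intro conjI ballI impI)
    show "HC m U \<in> O1 M \<kappa> s z0 z1" using HC_O1[OF m U] unfolding O1'_def .
  next
    fix v assume "v \<in> ?W"
    then obtain S where v: "v = HC m (PS S)" and S: "S \<in> U" by blast
    have "Up S \<subseteq> U" using O0_up[OF U S] unfolding Up_def by blast
    then have "PS S \<subseteq> U" unfolding PS_def by (intro Join_least[OF U]) auto
    then show "le1 M s v (HC m U)" unfolding le1_def v using HC_app by auto
  next
    fix w' assume w': "w' \<in> O1 M \<kappa> s z0 z1" and ub: "\<forall>v\<in>?W. le1 M s v w'"
    show "le1 M s (HC m U) w'" unfolding le1_def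
    proof
      fix n assume n: "n \<in> T1"
      have PSO: "{PS S | S. S \<in> U} \<subseteq> OZ" using PS_O0 by blast
      have "SIM m n \<inter> JJ {PS S | S. S \<in> U} \<subseteq> w' n"
      proof (rule LD[OF O0_upc[OF sim_O0] Union_upc[OF PSO]])
        show "w' n \<in> OZ" using O1_val[of w' n] w' n unfolding O1'_def by blast
        show "SIM m n \<inter> \<Union> {PS S | S. S \<in> U} \<subseteq> w' n"
        proof
          fix x assume "x \<in> SIM m n \<inter> \<Union> {PS S | S. S \<in> U}"
          then obtain S where x: "x \<in> SIM m n" "x \<in> PS S" and S: "S \<in> U" by blast
          have "le1 M s (HC m (PS S)) w'" using ub S by blast
          then have "HC m (PS S) n \<subseteq> w' n" using n unfolding le1_def by blast
          then show "x \<in> w' n" using x HC_app[OF n] by blast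
        qed
      qed
      moreover have "U \<subseteq> JJ {PS S | S. S \<in> U}"
      proof
        fix S assume S: "S \<in> U"
        have "S \<in> Up S" using O0_sub[OF U] S unfolding Up_def by blast
        moreover have "Up S \<subseteq> PS S" unfolding PS_def by (rule Join_ge1) simp
        moreover have "PS S \<subseteq> JJ {PS S | S. S \<in> U}" using S by (intro Join_ge1) blast
        ultimately show "S \<in> JJ {PS S | S. S \<in> U}" by blast
      qed
      ultimately show "HC m U n \<subseteq> w' n" using HC_app[OF n] by blast
    qed
  qed
  show ?thesis using Sf WS lub unfolding good_def by blast
qed

lemma O1_good: "good (O1 M \<kappa> s z0 z1)"
  unfolding good_def
proof (intro conjI ballI allI impI)
  show "O1 M \<kappa> s z0 z1 \<subseteq> O1 M \<kappa> s z0 z1" ..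
  show "GG \<subseteq> O1 M \<kappa> s z0 z1"
  proof
    fix v assume "v \<in> GG"
    then obtain m b where v: "v = basic1 M \<kappa> s z0 z1 m b" and m: "m \<in> T1" by (auto simp: GG_def)
    show "v \<in> O1 M \<kappa> s z0 z1" unfolding v basic_eq using HC_O1[OF m gen_O0] unfolding O1'_def .
  qed
  show "top1 M s z0 z1 \<in> O1 M \<kappa> s z0 z1"
    using O1_I[of "top1 M s z0 z1"] Fin_O0 unfolding O1'_def top1_def top0_def
    by (simp add: restrict_PiE_iff)
next
  fix v w assume v: "v \<in> O1 M \<kappa> s z0 z1" and w: "w \<in> O1 M \<kappa> s z0 z1"
  then have v': "v \<in> O1'" and w': "w \<in> O1'" unfolding O1'_def by auto
  show "meet1 M s v w \<in> O1 M \<kappa> s z0 z1"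
    unfolding O1'_def[symmetric]
  proof (rule O1_I)
    show "meet1 M s v w \<in> T1 \<rightarrow>\<^sub>E OZ"
      unfolding meet1_def using O0_Int O1_val[OF v'] O1_val[OF w'] by (simp add: restrict_PiE_iff)
  next
    fix b m1 m2 assume b: "complemented M z0 z1 b" and m1: "m1 \<in> T1" and m2: "m2 \<in> T1"
      and bs: "b \<subseteq> SIM m1 m2"
    have "b \<inter> v m1 = b \<inter> v m2" by (rule O1_cond[OF v' b m1 m2 bs])
    moreover have "b \<inter> w m1 = b \<inter> w m2" by (rule O1_cond[OF w' b m1 m2 bs])
    ultimately show "b \<inter> meet1 M s v w m1 = b \<inter> meet1 M s v w m2"
      unfolding meet1_def using m1 m2 by auto
  qed
next
  fix W w assume "W \<subseteq> O1 M \<kappa> s z0 z1" "is_lub1 M \<kappa> s z0 z1 W w"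
  then show "w \<in> O1 M \<kappa> s z0 z1" unfolding is_lub1_def by blast
qed

lemma main:
  "(\<forall>w \<in> O1 M \<kappa> s z0 z1.
            (\<forall>m \<in> Tm M {s}. meet1 M s (hat M \<kappa> s z0 z1 m) (const1 M s (w m)) \<in> O1 M \<kappa> s z0 z1) \<and>
            is_lub1 M \<kappa> s z0 z1
              {meet1 M s (hat M \<kappa> s z0 z1 m) (const1 M s (w m)) | m. m \<in> Tm M {s}} w)
       \<and> generated1 M \<kappa> s z0 z1 {basic1 M \<kappa> s z0 z1 m b | m b. m \<in> Tm M {s} \<and> b \<in> Tm M {z0, z1}}
           = O1 M \<kappa> s z0 z1"
proof (intro conjI ballI)
  fix w m assume w: "w \<in> O1 M \<kappa> s z0 z1" and m: "m \<in> T1"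
  show "HC m (w m) \<in> O1 M \<kappa> s z0 z1"
    using HC_O1[OF m O1_val[OF _ m]] w unfolding O1'_def by blast
next
  fix w assume w: "w \<in> O1 M \<kappa> s z0 z1"
  show "is_lub1 M \<kappa> s z0 z1 {HC m (w m) | m. m \<in> T1} w"
    using lub_w w unfolding O1'_def by blast
next
  have "generated1 M \<kappa> s z0 z1 GG = O1 M \<kappa> s z0 z1"
  proof
    show "generated1 M \<kappa> s z0 z1 GG \<subseteq> O1 M \<kappa> s z0 z1"
      unfolding gen1_eq using O1_good by blast
    show "O1 M \<kappa> s z0 z1 \<subseteq> generated1 M \<kappa> s z0 z1 GG"
      unfolding gen1_eq
    proof
      fix w assume w: "w \<in> O1 M \<kappa> s z0 z1"
      show "w \<in> \<Inter>{Sf. good Sf}"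
      proof
        fix Sf assume "Sf \<in> {Sf. good Sf}"
        then have Sf: "good Sf" by simp
        have w': "w \<in> O1'" using w unfolding O1'_def .
        have "{HC m (w m) | m. m \<in> T1} \<subseteq> Sf"
          using HC_in[OF Sf _ O1_val[OF w']] by blast
        then show "w \<in> Sf" using Sf lub_w[OF w'] unfolding good_def by blast
      qed
    qed
  qed
  then show "generated1 M \<kappa> s z0 z1 {basic1 M \<kappa> s z0 z1 m b | m b. m \<in> T1 \<and> b \<in> T2} = O1 M \<kappa> s z0 z1"
    unfolding GG_def .
qed

end

theorem lemma3p12:
  fixes M :: "('u, 't) smonad" and \<kappa> :: "'k rel" and s z0 z1 :: 'u
  assumes "is_monad M" and "ranked M \<kappa>" and "z0 \<noteq> z1"
  shows "(\<forall>w \<in> O1 M \<kappa> s z0 z1.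
            (\<forall>m \<in> Tm M {s}. meet1 M s (hat M \<kappa> s z0 z1 m) (const1 M s (w m)) \<in> O1 M \<kappa> s z0 z1) \<and>
            is_lub1 M \<kappa> s z0 z1
              {meet1 M s (hat M \<kappa> s z0 z1 m) (const1 M s (w m)) | m. m \<in> Tm M {s}} w)
       \<and> generated1 M \<kappa> s z0 z1 {basic1 M \<kappa> s z0 z1 m b | m b. m \<in> Tm M {s} \<and> b \<in> Tm M {z0, z1}}
           = O1 M \<kappa> s z0 z1"
proof -
  interpret LB M \<kappa> s z0 z1 using assms(1,2) by unfold_locales
  show ?thesis by (rule main)
qed


end
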